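(* Let $s$ be an aggregation method which, for every finite set $\mathcal R$ of reviewers and finite set $\mathcal P$ of papers, maps each recommendation profile $(y_{ia})_{i\in\mathcal R,a\in\mathcal P}\in[0,10]^{\mathcal R\times\mathcal P}$ to a solution vector $(s_a)_{a\in\mathcal P}\in[0,10]^{\mathcal P}$. If $s$ is continuous and satisfies Consensus and Consistency, then $s$ does not satisfy Strategy-proofness.
   Context: Continuity means that for each fixed $\mathcal R,\mathcal P$ the map $(y_{ia})\mapsto(s_a)$ is continuous. Axioms (a method satisfies an axiom if the property holds for every recommendation profile): Consensus: if for a paper $a$ we have $y_{ia}=y$ for all $i\in\mathcal R$, then $s_a=y$. Paper $a$ dominates paper $b$ if there is a permutation $\pi$ of $\mathcal R$ with $y_{ia}\ge y_{\pi(i)b}$ for all $i$; it strictly dominates if at least one of these inequalities is strict. Efficiency: whenever $a$ dominates $b$, $s_a\ge s_b$. Consistency: Efficiency holds and whenever $a$ strictly dominates $b$, $s_a>s_b$. Strategy-proofness: for every profile, every reviewer $i$ and every misreported recommendation vector $(y'_{ia})_{a\in\mathcal P}$ of reviewer $i$ (all other recommendations unchanged), the resulting solution $(s'_a)_a$ satisfies $\|(s'_a)_a-(y_{ia})_a\|_2\ge\|(s_a)_a-(y_{ia})_a\|_2$, where $(y_{ia})_a$ are reviewer $i$'s true recommendations and $(s_a)_a$ the solution for the true profile. *)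

theory Defs
  imports Complex_Main
begin

text \<open>An aggregation method takes the reviewer set R,
the paper set P and a recommendation profile y (y i a = recommendation of reviewer i for paper a)
and returns the solution vector (s a for a in P).\<close>

type_synonym agg_method = "nat set \<Rightarrow> nat set \<Rightarrow> (nat \<Rightarrow> nat \<Rightarrow> real) \<Rightarrow> nat \<Rightarrow> real"

text \<open>Profiles in [0,10]^(R x P); values outside R x P are fixed to 0 (canonical representatives).\<close>
definition profiles :: "nat set \<Rightarrow> nat set \<Rightarrow> (nat \<Rightarrow> nat \<Rightarrow> real) set" where
  "profiles R P = {y. \<forall>i a. (i \<in> R \<and> a \<in> P \<longrightarrow> 0 \<le> y i a \<and> y i a \<le> 10)
                          \<and> (\<not> (i \<in> R \<and> a \<in> P) \<longrightarrow> y i a = 0)}"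

definition admissible :: "nat set \<Rightarrow> nat set \<Rightarrow> bool" where
  "admissible R P \<longleftrightarrow> finite R \<and> finite P \<and> R \<noteq> {} \<and> P \<noteq> {}"

definition valid_method :: "agg_method \<Rightarrow> bool" where
  "valid_method s \<longleftrightarrow> (\<forall>R P. admissible R P \<longrightarrow>
     (\<forall>y \<in> profiles R P. \<forall>a \<in> P. 0 \<le> s R P y a \<and> s R P y a \<le> 10))"

definition continuous_method :: "agg_method \<Rightarrow> bool" where
  "continuous_method s \<longleftrightarrow> (\<forall>R P. admissible R P \<longrightarrow>
     (\<forall>y \<in> profiles R P. \<forall>e>0. \<exists>d>0. \<forall>y' \<in> profiles R P.
        (\<forall>i\<in>R. \<forall>a\<in>P. \<bar>y' i a - y i a\<bar> < d) \<longrightarrow> (\<forall>a\<in>P. \<bar>s R P y' a - s R P y a\<bar> < e)))"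

definition consensus :: "agg_method \<Rightarrow> bool" where
  "consensus s \<longleftrightarrow> (\<forall>R P. admissible R P \<longrightarrow>
     (\<forall>y \<in> profiles R P. \<forall>a \<in> P. \<forall>c. (\<forall>i\<in>R. y i a = c) \<longrightarrow> s R P y a = c))"

definition dominates :: "nat set \<Rightarrow> (nat \<Rightarrow> nat \<Rightarrow> real) \<Rightarrow> nat \<Rightarrow> nat \<Rightarrow> bool" where
  "dominates R y a b \<longleftrightarrow> (\<exists>\<pi>. bij_betw \<pi> R R \<and> (\<forall>i\<in>R. y i a \<ge> y (\<pi> i) b))"

definition strictly_dominates :: "nat set \<Rightarrow> (nat \<Rightarrow> nat \<Rightarrow> real) \<Rightarrow> nat \<Rightarrow> nat \<Rightarrow> bool" where
  "strictly_dominates R y a b \<longleftrightarrow> (\<exists>\<pi>. bij_betw \<pi> R R \<and> (\<forall>i\<in>R. y i a \<ge> y (\<pi> i) b)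
                                       \<and> (\<exists>i\<in>R. y i a > y (\<pi> i) b))"

definition efficiency :: "agg_method \<Rightarrow> bool" where
  "efficiency s \<longleftrightarrow> (\<forall>R P. admissible R P \<longrightarrow>
     (\<forall>y \<in> profiles R P. \<forall>a\<in>P. \<forall>b\<in>P. dominates R y a b \<longrightarrow> s R P y a \<ge> s R P y b))"

definition consistency :: "agg_method \<Rightarrow> bool" where
  "consistency s \<longleftrightarrow> efficiency s \<and> (\<forall>R P. admissible R P \<longrightarrow>
     (\<forall>y \<in> profiles R P. \<forall>a\<in>P. \<forall>b\<in>P. strictly_dominates R y a b \<longrightarrow> s R P y a > s R P y b))"

definition strategy_proof :: "agg_method \<Rightarrow> bool" where
  "strategy_proof s \<longleftrightarrow> (\<forall>R P. admissible R P \<longrightarrow>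
     (\<forall>y \<in> profiles R P. \<forall>i\<in>R. \<forall>v. (\<forall>a\<in>P. 0 \<le> v a \<and> v a \<le> 10) \<longrightarrow> (\<forall>a. a \<notin> P \<longrightarrow> v a = 0) \<longrightarrow>
        sqrt (\<Sum>a\<in>P. (s R P (y(i := v)) a - y i a)^2) \<ge> sqrt (\<Sum>a\<in>P. (s R P y a - y i a)^2)))"

end

theory Submission
  imports Defs "HOL-Analysis.Elementary_Metric_Spaces"
begin

theorem proposition3p2:
  fixes s :: agg_method
  assumes "valid_method s"
    and "continuous_method s"
    and "consensus s"
    and "consistency s"
  shows "\<not> strategy_proof s"
proof
  assume sp: "strategy_proof s"
  define R :: "nat set" where "R = {0,1}"
  define P :: "nat set" where "P = {0,1}"
  define prof :: "real \<Rightarrow> real \<Rightarrow> nat \<Rightarrow> nat \<Rightarrow> real" where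
    "prof x t = (\<lambda>i a. if i = 0 \<and> a = 0 then x else if i = 1 \<and> a = 0 then 10
                     else if i \<in> {0,1} \<and> a = 1 then t else 0)" for x t
  define G where "G x t = s R P (prof x t) 0" for x t
  have adm: "admissible R P" unfolding admissible_def R_def P_def by auto
  have CM: "\<forall>y \<in> profiles R P. \<forall>e>0. \<exists>d>0. \<forall>y' \<in> profiles R P.
        (\<forall>i\<in>R. \<forall>a\<in>P. \<bar>y' i a - y i a\<bar> < d) \<longrightarrow> (\<forall>a\<in>P. \<bar>s R P y' a - s R P y a\<bar> < e)"
    using assms(2) adm unfolding continuous_method_def by blast
  have inprof: "prof x t \<in> profiles R P" if "0 \<le> x" "x \<le> 10" "0 \<le> t" "t \<le> 10" for x t
    using that unfolding profiles_def prof_def R_def P_def by auto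
  have cons1: "s R P (prof x t) 1 = t" if "0 \<le> x" "x \<le> 10" "0 \<le> t" "t \<le> 10" for x t
    using assms(3) adm inprof[OF that] unfolding consensus_def
    by (metis (no_types, lifting) P_def R_def insertCI insert_iff prof_def singletonD zero_neq_one)
  have cons0: "G 10 t = 10" if "0 \<le> t" "t \<le> 10" for t
  proof -
    have "\<forall>i\<in>R. prof 10 t i 0 = 10" unfolding R_def prof_def by auto
    then show ?thesis using assms(3) adm inprof[of 10 t] that unfolding consensus_def G_def
      by (auto simp: P_def)
  qed
  have sdom: "strictly_dominates R (prof t t) 0 1" if "0 \<le> t" "t < 10" for t
    unfolding strictly_dominates_def
    apply (rule exI[of _ id])
    using that by (auto simp: R_def prof_def bij_betw_def)
  have lower: "G t t > t" if "0 \<le> t" "t < 10" for t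
  proof -
    have "s R P (prof t t) 0 > s R P (prof t t) 1"
      using assms(4) adm inprof[of t t] that sdom[OF that] unfolding consistency_def
      by (auto simp: P_def)
    then show ?thesis using cons1[of t t] that unfolding G_def by auto
  qed
  have spi: "\<bar>G x t - t\<bar> \<ge> \<bar>G t t - t\<bar>" if "0 \<le> x" "x \<le> 10" "0 \<le> t" "t \<le> 10" for x t
  proof -
    define v where "v = (\<lambda>a::nat. if a = 0 then x else if a = 1 then t else 0)"
    have upd: "(prof t t)(0 := v) = prof x t"
      by (rule ext)+ (auto simp: v_def prof_def)
    have "\<forall>a\<in>P. 0 \<le> v a \<and> v a \<le> 10" "\<forall>a. a \<notin> P \<longrightarrow> v a = 0"
      using that by (auto simp: v_def P_def)
    then have "sqrt (\<Sum>a\<in>P. (s R P (prof x t) a - prof t t 0 a)^2)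
             \<ge> sqrt (\<Sum>a\<in>P. (s R P (prof t t) a - prof t t 0 a)^2)"
      using sp adm inprof[of t t] that unfolding strategy_proof_def upd[symmetric]
      by (auto simp: R_def)
    then have "sqrt ((G x t - t)^2) \<ge> sqrt ((G t t - t)^2)"
    proof -
      have "prof t t 0 0 = t" "prof t t 0 1 = t" by (auto simp: prof_def)
      then show ?thesis using cons1[of x t] cons1[of t t] that \<open>sqrt _ \<ge> sqrt _\<close>
        by (simp add: P_def G_def)
    qed
    then show ?thesis by simp
  qed
  have contx: "continuous_on {0..10} (\<lambda>x. G x t)" if "0 \<le> t" "t \<le> 10" for t
    unfolding continuous_on_iff
  proof (intro ballI allI impI)
    fix x e :: real
    assume x: "x \<in> {0..10}" and e: "0 < e"
    have pin: "prof x t \<in> profiles R P" using inprof[of x t] x that by auto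
    obtain d where d: "d > 0" and H: "\<forall>y'\<in>profiles R P. (\<forall>i\<in>R. \<forall>a\<in>P. \<bar>y' i a - prof x t i a\<bar> < d)
        \<longrightarrow> (\<forall>a\<in>P. \<bar>s R P y' a - s R P (prof x t) a\<bar> < e)"
      using CM[rule_format, OF pin e] by blast
    show "\<exists>d>0. \<forall>x'\<in>{0..10}. dist x' x < d \<longrightarrow> dist (G x' t) (G x t) < e"
    proof (intro exI[of _ d] conjI ballI impI)
      fix x' assume x': "x' \<in> {0..10}" and dd: "dist x' x < d"
      have "\<forall>i\<in>R. \<forall>a\<in>P. \<bar>prof x' t i a - prof x t i a\<bar> < d"
        using dd d by (simp add: R_def P_def prof_def dist_real_def)
      moreover have "prof x' t \<in> profiles R P" using inprof[of x' t] x' that by auto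
      ultimately have "\<forall>a\<in>P. \<bar>s R P (prof x' t) a - s R P (prof x t) a\<bar> < e"
        using H by blast
      then show "dist (G x' t) (G x t) < e"
        by (simp add: G_def dist_real_def P_def)
    qed (use d in auto)
  qed
  have claim: "G 0 t > t" if tt: "0 \<le> t" "t < 10" for t
  proof (rule ccontr)
    assume "\<not> G 0 t > t"
    then have "G 0 t \<le> t" by simp
    moreover have "t \<le> G 10 t" using cons0[of t] that by simp
    ultimately obtain x where x: "0 \<le> x" "x \<le> 10" "G x t = t"
      using IVT'[of "\<lambda>x. G x t" 0 t 10] contx[of t] tt by auto
    show False using spi[of x t] x lower[of t] that by simp
  qed
  have g10: "G 0 10 < 10"
  proof -
    have "strictly_dominates R (prof 0 10) 1 0"
      unfolding strictly_dominates_def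
      apply (rule exI[of _ id])
      by (auto simp: R_def prof_def bij_betw_def)
    then have "s R P (prof 0 10) 1 > s R P (prof 0 10) 0"
      using assms(4) adm inprof[of 0 10] unfolding consistency_def
      by (auto simp: P_def)
    then show ?thesis using cons1[of 0 10] unfolding G_def by auto
  qed
  have g10p: "G 0 10 \<ge> 0"
    using assms(1) adm inprof[of 0 10] unfolding valid_method_def G_def by (auto simp: P_def)
  define e where "e = (10 - G 0 10) / 2"
  have e: "e > 0" "e \<le> 5" using g10 g10p by (auto simp: e_def)
  obtain d where d: "d > 0" and H: "\<forall>y'\<in>profiles R P. (\<forall>i\<in>R. \<forall>a\<in>P. \<bar>y' i a - prof 0 10 i a\<bar> < d)
        \<longrightarrow> (\<forall>a\<in>P. \<bar>s R P y' a - s R P (prof 0 10) a\<bar> < e)"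
    using CM[rule_format, OF inprof[of 0 10] e(1)] by force
  define t where "t = 10 - min (d/2) e"
  have t: "0 \<le> t" "t < 10" "t \<ge> 10 - e" "10 - t < d"
    using d e by (auto simp: t_def)
  have "\<forall>i\<in>R. \<forall>a\<in>P. \<bar>prof 0 t i a - prof 0 10 i a\<bar> < d"
    using t d by (simp add: R_def P_def prof_def)
  moreover have "prof 0 t \<in> profiles R P" using inprof[of 0 t] t by auto
  ultimately have "\<forall>a\<in>P. \<bar>s R P (prof 0 t) a - s R P (prof 0 10) a\<bar> < e"
    using H by blast
  then have "\<bar>G 0 t - G 0 10\<bar> < e"
    by (simp add: G_def P_def)
  then have "G 0 t < G 0 10 + e" by (simp add: abs_less_iff)
  moreover have "G 0 10 + e = 10 - e" unfolding e_def by (simp add: field_simps)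
  ultimately have "G 0 t < t" using t(3) by linarith
  then show False using claim[OF t(1,2)] by linarith
qed

end
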